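(* Let $f=p_1\cdots p_d\in\mathbb{C}[z_1,\dots,z_n]$ be a product of $d\ge 1$ homogeneous linear polynomials $p_1,\dots,p_d$. If $\mathcal I(f)\neq\mathbb{R}^n$, then the number of distinct hyperbolicity cones of $f$ is positive and at most $2^d$ if $1\le d\le n$, and at most $2\sum_{k=0}^{n-1}\binom{d-1}{k}$ if $d>n$.
   Context: For $f\in\mathbb{C}[z_1,\dots,z_n]$, $\mathcal{V}(f)\subseteq\mathbb{C}^n$ denotes its complex zero set and the imaginary projection of $f$ is $\mathcal{I}(f)=\{\Im(\mathbf z):\mathbf z\in\mathcal V(f)\}\subseteq\mathbb{R}^n$, where $\Im$ is taken componentwise. A homogeneous polynomial $f\in\mathbb{C}[z_1,\dots,z_n]$ is hyperbolic in direction $\mathbf e\in\mathbb{R}^n$ if $f(\mathbf e)\neq 0$ and for every $\mathbf x\in\mathbb{R}^n$ the univariate polynomial $t\mapsto f(\mathbf x+t\mathbf e)$ has only real roots. In that case the hyperbolicity cone of $f$ with respect to $\mathbf e$ is $C(\mathbf e)=\{\mathbf x\in\mathbb{R}^n: f(\mathbf x+t\mathbf e)=0\Rightarrow t<0\}$. The hyperbolicity cones of $f$ are the sets $C(\mathbf e)$ for all directions $\mathbf e$ in which $f$ is hyperbolic. *)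

theory Defs
  imports "HOL-Analysis.Analysis"
begin

text \<open>Vectors in C^n and R^n are modelled as complex^'n and real^'n,
  with n = CARD('n). Polynomial functions on C^n are represented by the
  functions they induce.\<close>

definition cvec :: "real^'n \<Rightarrow> complex^'n" where
  "cvec x = (\<chi> j. complex_of_real (x $ j))"

definition imvec :: "complex^'n \<Rightarrow> real^'n" where
  "imvec z = (\<chi> j. Im (z $ j))"

text \<open>The homogeneous linear polynomial with coefficient vector a:
  z \<mapsto> a_1 z_1 + ... + a_n z_n (it is a degree-one form iff a \<noteq> 0).\<close>
definition linform :: "complex^'n \<Rightarrow> complex^'n \<Rightarrow> complex" where
  "linform a z = (\<Sum>j\<in>UNIV. a $ j * z $ j)"

definition prod_lin :: "(complex^'n) list \<Rightarrow> complex^'n \<Rightarrow> complex" where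
  "prod_lin ps z = (\<Prod>a\<leftarrow>ps. linform a z)"

definition imag_proj :: "(complex^'n \<Rightarrow> complex) \<Rightarrow> (real^'n) set" where
  "imag_proj f = {imvec z | z. f z = 0}"

definition hyperbolic :: "(complex^'n \<Rightarrow> complex) \<Rightarrow> real^'n \<Rightarrow> bool" where
  "hyperbolic f e \<longleftrightarrow> f (cvec e) \<noteq> 0 \<and>
     (\<forall>x::real^'n. \<forall>t::complex. f (cvec x + t *s cvec e) = 0 \<longrightarrow> t \<in> \<real>)"

definition hyp_cone :: "(complex^'n \<Rightarrow> complex) \<Rightarrow> real^'n \<Rightarrow> (real^'n) set" where
  "hyp_cone f e = {x. \<forall>t::real. f (cvec (x + t *\<^sub>R e)) = 0 \<longrightarrow> t < 0}"

definition hyp_cones :: "(complex^'n \<Rightarrow> complex) \<Rightarrow> (real^'n) set set" where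
  "hyp_cones f = {hyp_cone f e | e. hyperbolic f e}"

end

theory Submission
  imports Defs
begin


definition pats :: "(real^'n) set \<Rightarrow> (real^'n) list \<Rightarrow> bool list set" where
  "pats V ls = {map (\<lambda>l. 0 < l \<bullet> x) ls | x. x \<in> V \<and> (\<forall>l\<in>set ls. l \<bullet> x \<noteq> 0)}"

fun R :: "nat \<Rightarrow> nat \<Rightarrow> nat" where
  "R 0 m = 1" | "R (Suc d) 0 = 0" | "R (Suc d) (Suc m) = R d (Suc m) + R d m"

lemma pats_finite: "finite (pats V ls)"
proof -
  have "pats V ls \<subseteq> {xs. set xs \<subseteq> (UNIV::bool set) \<and> length xs = length ls}"
    by (auto simp: pats_def)
  moreover have "finite {xs. set xs \<subseteq> (UNIV::bool set) \<and> length xs = length ls}"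
    by (rule finite_lists_length_eq) simp
  ultimately show ?thesis by (rule finite_subset)
qed

lemma sign_comb:
  fixes a b t :: real
  assumes "a \<noteq> 0" "b \<noteq> 0" "(0 < a) = (0 < b)" "0 < t" "t < 1"
  shows "(1 - t) * a + t * b \<noteq> 0 \<and> (0 < (1 - t) * a + t * b) = (0 < a)"
proof (cases "0 < a")
  case True
  then have "0 < b" using assms by simp
  have "0 < (1 - t) * a" using True assms by simp
  moreover have "0 < t * b" using \<open>0 < b\<close> assms by simp
  ultimately show ?thesis using True by linarith
next
  case False
  then have "a < 0" "b < 0" using assms by auto
  have "(1 - t) * a < 0" using \<open>a < 0\<close> assms by (simp add: mult_pos_neg)
  moreover have "t * b < 0" using \<open>b < 0\<close> assms by (simp add: mult_pos_neg)
  ultimately show ?thesis using False by linarith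
qed

lemma between:
  fixes V :: "(real^'n) set"
  assumes V: "subspace V" and x: "x \<in> V" and y: "y \<in> V"
    and lx: "l \<bullet> x > 0" and ly: "l \<bullet> y < 0"
    and nx: "\<forall>l'\<in>set ls. l' \<bullet> x \<noteq> 0" and ny: "\<forall>l'\<in>set ls. l' \<bullet> y \<noteq> 0"
    and eq: "map (\<lambda>l. 0 < l \<bullet> x) ls = map (\<lambda>l. 0 < l \<bullet> y) ls"
  shows "map (\<lambda>l. 0 < l \<bullet> x) ls \<in> pats (V \<inter> {x. l \<bullet> x = 0}) ls"
proof -
  define t where "t = (l \<bullet> x) / (l \<bullet> x - l \<bullet> y)"
  have t0: "0 < t" "t < 1" using lx ly by (auto simp: t_def field_simps)
  define z where "z = (1 - t) *\<^sub>R x + t *\<^sub>R y"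
  have zV: "z \<in> V" unfolding z_def using V x y
    by (simp add: subspace_add subspace_scale)
  have "l \<bullet> z = (1 - t) * (l \<bullet> x) + t * (l \<bullet> y)" by (simp add: z_def inner_simps)
  also have "\<dots> = 0" using lx ly by (simp add: t_def field_simps)
  finally have lz: "l \<bullet> z = 0" .
  have comp: "l' \<bullet> z \<noteq> 0 \<and> (0 < l' \<bullet> z) = (0 < l' \<bullet> x)" if "l' \<in> set ls" for l'
  proof -
    have "(0 < l' \<bullet> x) = (0 < l' \<bullet> y)" using eq that by (auto simp: map_eq_conv)
    then have "(1 - t) * (l' \<bullet> x) + t * (l' \<bullet> y) \<noteq> 0 \<and>
      (0 < (1 - t) * (l' \<bullet> x) + t * (l' \<bullet> y)) = (0 < l' \<bullet> x)"
      using sign_comb[of "l' \<bullet> x" "l' \<bullet> y" t] nx ny that t0 by auto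
    moreover have "l' \<bullet> z = (1 - t) * (l' \<bullet> x) + t * (l' \<bullet> y)" by (simp add: z_def inner_simps)
    ultimately show ?thesis by simp
  qed
  have "map (\<lambda>l. 0 < l \<bullet> x) ls = map (\<lambda>l. 0 < l \<bullet> z) ls"
    using comp by (auto simp: map_eq_conv)
  then show ?thesis unfolding pats_def using zV lz comp by blast
qed

lemma pats_bound:
  fixes ls :: "(real^'n) list"
  shows "subspace V \<Longrightarrow> dim V \<le> m \<Longrightarrow> card (pats V ls) \<le> R (length ls) m"
proof (induction ls arbitrary: V m)
  case Nil
  have "pats V [] \<subseteq> {[]}" by (auto simp: pats_def)
  then have "card (pats V []) \<le> card {[]::bool list}" by (intro card_mono) auto
  then show ?case by simp
next
  case (Cons l ls)
  show ?case
  proof (cases "\<exists>x\<in>V. l \<bullet> x \<noteq> 0")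
    case False
    then have "pats V (l # ls) = {}" by (auto simp: pats_def)
    then show ?thesis by simp
  next
    case True
    then obtain x0 where x0: "x0 \<in> V" "l \<bullet> x0 \<noteq> 0" by blast
    show ?thesis
    proof (cases m)
      case 0
      then have "V \<subseteq> {0}" using Cons.prems by simp
      then show ?thesis using x0 by auto
    next
      case (Suc m')
      define W where "W = V \<inter> {x. l \<bullet> x = 0}"
      have sW: "subspace W" unfolding W_def using Cons.prems(1)
        by (simp add: subspace_inter subspace_hyperplane)
      have "span W \<subset> span V"
      proof -
        have "W \<subset> V" using x0 by (auto simp: W_def)
        moreover have "span W = W" "span V = V" using sW Cons.prems(1) by (simp_all add: span_eq_iff)
        ultimately show ?thesis by metis
      qed
      then have "dim W < dim V" by (rule dim_psubset)
      then have dW: "dim W \<le> m'" using Cons.prems(2) Suc by simp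
      define P where "P = pats V (l # ls)"
      define A where "A = {p. True # p \<in> P}"
      define B where "B = {p. False # p \<in> P}"
      have AV: "A \<subseteq> pats V ls" "B \<subseteq> pats V ls"
        by (auto simp: A_def B_def P_def pats_def)
      have AB: "A \<inter> B \<subseteq> pats W ls"
      proof
        fix p assume "p \<in> A \<inter> B"
        then have "True # p \<in> P" "False # p \<in> P" by (auto simp: A_def B_def)
        then obtain x y where x: "x \<in> V" "\<forall>l'\<in>set (l#ls). l' \<bullet> x \<noteq> 0"
            "True # p = map (\<lambda>l. 0 < l \<bullet> x) (l#ls)"
          and y: "y \<in> V" "\<forall>l'\<in>set (l#ls). l' \<bullet> y \<noteq> 0"
            "False # p = map (\<lambda>l. 0 < l \<bullet> y) (l#ls)"
          unfolding P_def pats_def mem_Collect_eq by metis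
        have "l \<bullet> x > 0" "l \<bullet> y < 0" using x y by auto
        moreover have "p = map (\<lambda>l. 0 < l \<bullet> x) ls" "p = map (\<lambda>l. 0 < l \<bullet> y) ls"
          using x y by auto
        ultimately have "map (\<lambda>l. 0 < l \<bullet> x) ls \<in> pats W ls" unfolding W_def
          using between[OF Cons.prems(1) x(1) y(1), of l ls] x y by auto
        then show "p \<in> pats W ls" using \<open>p = map (\<lambda>l. 0 < l \<bullet> x) ls\<close> by simp
      qed
      have fin: "finite A" "finite B"
        using AV pats_finite finite_subset by blast+
      have "P \<subseteq> Cons True ` A \<union> Cons False ` B"
      proof
        fix q assume "q \<in> P"
        then obtain b p where "q = b # p" unfolding P_def pats_def by auto
        then show "q \<in> Cons True ` A \<union> Cons False ` B"
          using \<open>q \<in> P\<close> by (cases b) (auto simp: A_def B_def)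
      qed
      then have "card P \<le> card (Cons True ` A \<union> Cons False ` B)"
        using fin by (intro card_mono) auto
      also have "\<dots> \<le> card (Cons True ` A) + card (Cons False ` B)" by (rule card_Un_le)
      also have "\<dots> \<le> card A + card B" by (intro add_mono card_image_le fin)
      also have "\<dots> = card (A \<union> B) + card (A \<inter> B)" using card_Un_Int[OF fin] .
      also have "\<dots> \<le> card (pats V ls) + card (pats W ls)"
        using AV AB by (intro add_mono card_mono pats_finite) auto
      also have "\<dots> \<le> R (length ls) (Suc m') + R (length ls) m'"
        using Cons.IH[OF Cons.prems(1)] Cons.prems(2) Suc Cons.IH[OF sW dW] by (intro add_mono) auto
      finally show ?thesis by (simp add: P_def Suc)
    qed
  qed
qed




lemma choose_sum_step:
  "(\<Sum>k=0..Suc m. Suc d choose k) = (\<Sum>k=0..Suc m. d choose k) + (\<Sum>k=0..m. d choose k)"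
proof (induction m)
  case 0
  then show ?case by (simp add: numeral_2_eq_2)
next
  case (Suc m)
  have "(\<Sum>k=0..Suc (Suc m). Suc d choose k) = (\<Sum>k=0..Suc m. Suc d choose k) + ((Suc d) choose (Suc (Suc m)))"
    by simp
  also have "\<dots> = (\<Sum>k=0..Suc m. d choose k) + (\<Sum>k=0..m. d choose k) + ((d choose (Suc m)) + (d choose (Suc (Suc m))))"
    using Suc by simp
  finally show ?case by simp
qed

lemma choose_sum_full:
  assumes "d \<le> m"
  shows "(\<Sum>k=0..m. d choose k) = 2 ^ d"
proof -
  have "(\<Sum>k=0..m. d choose k) = (\<Sum>k=0..d. d choose k)"
    using assms by (intro sum.mono_neutral_right) auto
  also have "\<dots> = 2 ^ d" using choose_row_sum[of d] by (simp add: atLeast0AtMost)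
  finally show ?thesis .
qed

lemma R_closed: "R (Suc d) (Suc m) = 2 * (\<Sum>k=0..m. d choose k)"
proof (induction d arbitrary: m)
  case 0
  then show ?case using choose_sum_full[of 0] by (cases m) auto
next
  case (Suc d)
  note IH = Suc.IH
  show ?case
  proof (cases m)
    case 0
    then show ?thesis using IH by simp
  next
    case (Suc m')
    note mS = Suc
    have "R (Suc (Suc d)) (Suc m) = R (Suc d) (Suc m) + R (Suc d) m" by simp
    also have "\<dots> = 2 * (\<Sum>k=0..Suc m'. d choose k) + 2 * (\<Sum>k=0..m'. d choose k)"
      using IH[of m] IH[of m'] mS by simp
    also have "\<dots> = 2 * (\<Sum>k=0..Suc m'. Suc d choose k)" using choose_sum_step[where m=m' and d=d] by simp
    finally show ?thesis using mS by simp
  qed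
qed

lemma R_bound:
  assumes "d \<ge> 1" "n \<ge> 1"
  shows "R d n = (if d \<le> n then 2 ^ d else 2 * (\<Sum>k = 0..n - 1. (d - 1) choose k))"
proof -
  obtain d' n' where dn: "d = Suc d'" "n = Suc n'" using assms by (metis Suc_le_D One_nat_def)
  show ?thesis
  proof (cases "d \<le> n")
    case True
    then have "d' \<le> n'" using dn by simp
    then show ?thesis using True dn R_closed[of d' n'] choose_sum_full[of d' n'] by simp
  next
    case False
    then show ?thesis using dn R_closed[of d' n'] by simp
  qed
qed

lemma exists_generic:
  fixes ls :: "(real^'n) list"
  shows "\<forall>l\<in>set ls. l \<noteq> 0 \<Longrightarrow> \<exists>e. \<forall>l\<in>set ls. l \<bullet> e \<noteq> 0"
proof (induction ls)
  case Nil
  then show ?case by simp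
next
  case (Cons l ls)
  then obtain e where e: "\<forall>l'\<in>set ls. l' \<bullet> e \<noteq> 0" by auto
  have l0: "l \<noteq> 0" using Cons.prems by simp
  define bad where "bad = insert (-(l \<bullet> e)/(l \<bullet> l)) ((\<lambda>l'. -(l' \<bullet> e)/(l' \<bullet> l)) ` set ls)"
  have "finite bad" by (simp add: bad_def)
  then obtain s where s: "s \<notin> bad" using ex_new_if_finite[OF infinite_UNIV_char_0] by blast
  define e' where "e' = e + s *\<^sub>R l"
  have "l \<bullet> e' \<noteq> 0"
  proof
    assume "l \<bullet> e' = 0"
    then have "l \<bullet> e + s * (l \<bullet> l) = 0" by (simp add: e'_def inner_simps)
    then have "s = -(l \<bullet> e)/(l \<bullet> l)" using l0 by (simp add: field_simps)
    then show False using s by (simp add: bad_def)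
  qed
  moreover have "l' \<bullet> e' \<noteq> 0" if "l' \<in> set ls" for l'
  proof
    assume "l' \<bullet> e' = 0"
    then have h: "l' \<bullet> e + s * (l' \<bullet> l) = 0" by (simp add: e'_def inner_simps)
    show False
    proof (cases "l' \<bullet> l = 0")
      case True
      then show False using h e that by simp
    next
      case False
      then have "s = -(l' \<bullet> e)/(l' \<bullet> l)" using h by (simp add: field_simps)
      then show False using s that by (simp add: bad_def)
    qed
  qed
  ultimately show ?case by auto
qed



lemma linform_smult: "linform (c *s a) z = c * linform a z"
  by (simp add: linform_def sum_distrib_left mult.assoc)

lemma linform_cvec: "linform (cvec r) (cvec y) = complex_of_real (r \<bullet> y)"
  by (simp add: linform_def cvec_def inner_vec_def)

lemma linform_cvec2:
  "linform (cvec r) (cvec x + t *s cvec e) = complex_of_real (r \<bullet> x) + t * complex_of_real (r \<bullet> e)"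
  by (simp add: linform_def cvec_def inner_vec_def distrib_left sum.distrib sum_distrib_left algebra_simps)



lemma solve2:
  fixes u v :: "real^'n"
  assumes u0: "u \<noteq> 0" and v'0: "v - ((v \<bullet> u)/(u \<bullet> u)) *\<^sub>R u \<noteq> 0"
  shows "\<exists>x. u \<bullet> x = \<alpha> \<and> v \<bullet> x = \<beta>"
proof -
  define k where "k = (v \<bullet> u)/(u \<bullet> u)"
  define w where "w = v - k *\<^sub>R u"
  have uu: "u \<bullet> u \<noteq> 0" using u0 by simp
  have ww: "w \<bullet> w \<noteq> 0" using v'0 by (simp add: w_def k_def)
  have uw: "u \<bullet> w = 0" using uu by (simp add: w_def k_def inner_simps inner_commute)
  have vw: "v \<bullet> w = w \<bullet> w"
  proof -
    have "v = w + k *\<^sub>R u" by (simp add: w_def)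
    then have "v \<bullet> w = w \<bullet> w + k * (u \<bullet> w)" by (metis inner_add_left inner_scaleR_left)
    then show ?thesis using uw by simp
  qed
  define s where "s = \<alpha> / (u \<bullet> u)"
  define t where "t = (\<beta> - s * (v \<bullet> u)) / (w \<bullet> w)"
  define x where "x = s *\<^sub>R u + t *\<^sub>R w"
  have "u \<bullet> x = \<alpha>" using uu uw by (simp add: x_def s_def inner_simps)
  moreover have "v \<bullet> x = \<beta>" using ww vw
    by (simp add: x_def t_def inner_simps inner_commute[of v u])
  ultimately show ?thesis by blast
qed



lemma real_multiple:
  fixes a :: "complex^'n"
  assumes nrep: "\<not> (\<exists>c r. c \<noteq> 0 \<and> a = c *s cvec r)"
  shows "\<exists>z. linform a z = 0 \<and> imvec z = y"
proof -
  define u where "u = (\<chi> j. Re (a $ j))"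
  define v where "v = (\<chi> j. Im (a $ j))"
  have i0: "\<i> \<noteq> 0" by simp
  have u0: "u \<noteq> 0"
  proof
    assume "u = 0"
    then have "a = \<i> *s cvec v"
      by (simp add: vec_eq_iff u_def v_def cvec_def complex_eq_iff)
    then show False using nrep i0 by blast
  qed
  define k where "k = (v \<bullet> u)/(u \<bullet> u)"
  have v0: "v - k *\<^sub>R u \<noteq> 0"
  proof
    assume "v - k *\<^sub>R u = 0"
    then have "\<forall>j. Im (a $ j) = k * Re (a $ j)"
      by (simp add: vec_eq_iff u_def v_def)
    then have "a = (1 + \<i> * complex_of_real k) *s cvec u"
      by (simp add: vec_eq_iff u_def cvec_def complex_eq_iff)
    moreover have "1 + \<i> * complex_of_real k \<noteq> 0" by (simp add: complex_eq_iff)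
    ultimately show False using nrep by blast
  qed
  obtain x where x: "u \<bullet> x = v \<bullet> y" "v \<bullet> x = - (u \<bullet> y)"
    using solve2[OF u0 v0[unfolded k_def]] by blast
  define z where "z = cvec x + \<i> *s cvec y"
  have "Re (linform a z) = u \<bullet> x - v \<bullet> y"
    by (simp add: linform_def z_def cvec_def u_def v_def inner_vec_def Re_sum sum_subtractf)
  moreover have "Im (linform a z) = v \<bullet> x + u \<bullet> y"
    by (simp add: linform_def z_def cvec_def u_def v_def inner_vec_def Im_sum sum.distrib algebra_simps)
  ultimately have "linform a z = 0" using x by (simp add: complex_eq_iff)
  moreover have "imvec z = y" by (simp add: vec_eq_iff imvec_def z_def cvec_def)
  ultimately show ?thesis by blast
qed




theorem lemma3p1:
  fixes ps :: "(complex^'n) list"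
  assumes "length ps \<ge> 1"
    and "\<forall>a\<in>set ps. a \<noteq> 0"
    and "imag_proj (prod_lin ps) \<noteq> UNIV"
  shows "finite (hyp_cones (prod_lin ps)) \<and> card (hyp_cones (prod_lin ps)) > 0 \<and>
    card (hyp_cones (prod_lin ps)) \<le>
      (if length ps \<le> CARD('n) then 2 ^ length ps
       else 2 * (\<Sum>k = 0..CARD('n) - 1. (length ps - 1) choose k))"
proof -
  define f where "f = prod_lin ps"
  have f0: "f z = 0 \<longleftrightarrow> (\<exists>a\<in>set ps. linform a z = 0)" for z
    by (force simp: f_def prod_lin_def prod_list_zero_iff)
  obtain y0 where y0: "y0 \<notin> imag_proj f" using assms(3) f_def by blast
  have rep: "\<exists>c r. c \<noteq> 0 \<and> a = c *s cvec r" if "a \<in> set ps" for a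
  proof (rule ccontr)
    assume "\<not> (\<exists>c r. c \<noteq> 0 \<and> a = c *s cvec r)"
    then obtain z where "linform a z = 0" "imvec z = y0" using real_multiple by blast
    then have "f z = 0" using f0 that by blast
    then have "y0 \<in> imag_proj f" using \<open>imvec z = y0\<close> by (auto simp: imag_proj_def)
    then show False using y0 by simp
  qed
  then obtain c r where cr: "\<forall>a\<in>set ps. c a \<noteq> 0 \<and> a = c a *s cvec (r a)"
    by metis
  have r0: "\<forall>a\<in>set ps. r a \<noteq> 0"
  proof
    fix a assume a: "a \<in> set ps"
    show "r a \<noteq> 0"
    proof
      assume "r a = 0"
      then have "a = 0" using cr a by (simp add: vec_eq_iff cvec_def)
      then show False using assms(2) a by blast
    qed
  qed
  have fz: "f z = 0 \<longleftrightarrow> (\<exists>a\<in>set ps. linform (cvec (r a)) z = 0)" for z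
  proof -
    have "linform a z = 0 \<longleftrightarrow> linform (cvec (r a)) z = 0" if "a \<in> set ps" for a
    proof -
      have "linform a z = c a * linform (cvec (r a)) z"
        using cr that linform_smult by metis
      then show ?thesis using cr that by simp
    qed
    then show ?thesis using f0 by blast
  qed
  have hyp_iff: "hyperbolic f e \<longleftrightarrow> (\<forall>a\<in>set ps. r a \<bullet> e \<noteq> 0)" for e
  proof
    assume "hyperbolic f e"
    then have "f (cvec e) \<noteq> 0" by (simp add: hyperbolic_def)
    then show "\<forall>a\<in>set ps. r a \<bullet> e \<noteq> 0" using fz by (auto simp: linform_cvec)
  next
    assume H: "\<forall>a\<in>set ps. r a \<bullet> e \<noteq> 0"
    have "f (cvec e) \<noteq> 0" using fz H by (auto simp: linform_cvec)
    moreover have "t \<in> \<real>" if fx: "f (cvec x + t *s cvec e) = 0" for x t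
    proof -
      obtain a where a: "a \<in> set ps"
        "complex_of_real (r a \<bullet> x) + t * complex_of_real (r a \<bullet> e) = 0"
        using fx fz by (auto simp: linform_cvec2)
      have ne: "complex_of_real (r a \<bullet> e) \<noteq> 0" using H a(1) by simp
      have "t * complex_of_real (r a \<bullet> e) = - complex_of_real (r a \<bullet> x)"
        using a(2) by (metis add.commute add_eq_0_iff)
      then have "t = complex_of_real (- (r a \<bullet> x) / (r a \<bullet> e))"
        using ne by (simp add: field_simps)
      then show ?thesis by simp
    qed
    ultimately show "hyperbolic f e" by (simp add: hyperbolic_def)
  qed
  define G where "G p = {x. (\<forall>a\<in>set ps. r a \<bullet> x \<noteq> 0) \<and> map (\<lambda>a. 0 < r a \<bullet> x) ps = p}" for p
  have cone_eq: "hyp_cone f e = G (map (\<lambda>a. 0 < r a \<bullet> e) ps)"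
    if H: "\<forall>a\<in>set ps. r a \<bullet> e \<noteq> 0" for e
  proof -
    have mem: "x \<in> hyp_cone f e \<longleftrightarrow>
      (\<forall>t. (\<exists>a\<in>set ps. r a \<bullet> x + t * (r a \<bullet> e) = 0) \<longrightarrow> t < 0)" for x
    proof -
      have "f (cvec (x + t *\<^sub>R e)) = 0 \<longleftrightarrow> (\<exists>a\<in>set ps. r a \<bullet> x + t * (r a \<bullet> e) = 0)" for t
        using fz by (simp add: linform_cvec inner_simps del: of_real_add of_real_mult)
      then show ?thesis by (simp add: hyp_cone_def)
    qed
    show ?thesis
    proof (intro set_eqI iffI)
      fix x assume "x \<in> hyp_cone f e"
      then have M: "\<And>t a. a \<in> set ps \<Longrightarrow> r a \<bullet> x + t * (r a \<bullet> e) = 0 \<Longrightarrow> t < 0"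
        using mem by blast
      have P: "0 < (r a \<bullet> x) / (r a \<bullet> e)" if a: "a \<in> set ps" for a
      proof -
        have "r a \<bullet> x + (- (r a \<bullet> x) / (r a \<bullet> e)) * (r a \<bullet> e) = 0" using H a by simp
        then have "- (r a \<bullet> x) / (r a \<bullet> e) < 0" using M a by blast
        then show ?thesis by simp
      qed
      have "r a \<bullet> x \<noteq> 0 \<and> (0 < r a \<bullet> x) = (0 < r a \<bullet> e)" if "a \<in> set ps" for a
        using P[OF that] by (auto simp: zero_less_divide_iff)
      then show "x \<in> G (map (\<lambda>a. 0 < r a \<bullet> e) ps)" by (auto simp: G_def)
    next
      fix x assume "x \<in> G (map (\<lambda>a. 0 < r a \<bullet> e) ps)"
      then have X: "\<And>a. a \<in> set ps \<Longrightarrow> r a \<bullet> x \<noteq> 0 \<and> (0 < r a \<bullet> x) = (0 < r a \<bullet> e)"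
        by (auto simp: G_def)
      have "t < 0" if a: "a \<in> set ps" and eq: "r a \<bullet> x + t * (r a \<bullet> e) = 0" for t a
      proof -
        have "t = - ((r a \<bullet> x) / (r a \<bullet> e))" using eq H a by (simp add: field_simps)
        moreover have "0 < (r a \<bullet> x) / (r a \<bullet> e)"
          using X[OF a] H a by (auto simp: zero_less_divide_iff)
        ultimately show ?thesis by simp
      qed
      then show "x \<in> hyp_cone f e" using mem by blast
    qed
  qed
  have sub: "hyp_cones f \<subseteq> G ` pats UNIV (map r ps)"
  proof
    fix C assume "C \<in> hyp_cones f"
    then obtain e where e: "hyperbolic f e" "C = hyp_cone f e" by (auto simp: hyp_cones_def)
    then have H: "\<forall>a\<in>set ps. r a \<bullet> e \<noteq> 0" using hyp_iff by blast
    have "map (\<lambda>a. 0 < r a \<bullet> e) ps \<in> pats UNIV (map r ps)"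
      unfolding pats_def using H by (force simp: o_def)
    then show "C \<in> G ` pats UNIV (map r ps)" using e cone_eq[OF H] by blast
  qed
  have fin: "finite (hyp_cones f)"
    using sub pats_finite finite_subset finite_imageI by metis
  have "\<forall>l\<in>set (map r ps). l \<noteq> 0" using r0 by auto
  from exists_generic[OF this] obtain e where e: "\<forall>l\<in>set (map r ps). l \<bullet> e \<noteq> 0" by blast
  then have "hyperbolic f e" by (simp add: hyp_iff)
  then have "hyp_cone f e \<in> hyp_cones f" by (auto simp: hyp_cones_def)
  then have pos: "card (hyp_cones f) > 0" using fin card_gt_0_iff by blast
  have "card (hyp_cones f) \<le> card (G ` pats UNIV (map r ps))"
    using sub by (intro card_mono finite_imageI pats_finite)
  also have "\<dots> \<le> card (pats UNIV (map r ps))" by (rule card_image_le[OF pats_finite])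
  also have "\<dots> \<le> R (length ps) CARD('n)"
    using pats_bound[of "UNIV :: (real^'n) set" "CARD('n)" "map r ps"] by simp
  also have "\<dots> = (if length ps \<le> CARD('n) then 2 ^ length ps
       else 2 * (\<Sum>k = 0..CARD('n) - 1. (length ps - 1) choose k))"
    using R_bound[OF assms(1), of "CARD('n)"] by simp
  finally show ?thesis using fin pos by (simp add: f_def)
qed


end
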